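(* Let $K\ge2$ and $\alpha\in\mathbb{R}$. The function $-S_\alpha$ is $C_{\alpha,K}$-strongly convex with respect to $\|\cdot\|_1$ on $\operatorname{relint}(\Delta^K)$, i.e. for all $p,q\in\operatorname{relint}(\Delta^K)$, \[ -S_\alpha(p)\ \ge\ -S_\alpha(q)+\langle\nabla(-S_\alpha)(q),p-q\rangle+\frac{C_{\alpha,K}}{2}\|p-q\|_1^2, \] and $C_{\alpha,K}$ is the largest constant for which this holds. Here $C_{\alpha,K}=2^{1-\alpha}$ if $\alpha\le 1$; $C_{\alpha,K}=K^{1-\alpha}$ if $\alpha\in(1,2]$ and $K$ even; $C_{\alpha,K}=K^{1-\alpha}\left(\frac{(1-\frac1K)^{\frac{1-\alpha}{3-\alpha}}+(1+\frac1K)^{\frac{1-\alpha}{3-\alpha}}}{2}\right)^{3-\alpha}$ if $\alpha\in(1,2]$ and $K$ odd; $C_{\alpha,K}=2^{1-\max\{\alpha,3\}}$ if $\alpha>2$ and $K=2$; and $C_{\alpha,K}=0$ if $\alpha>2$ and $K\ge3$.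
   Context: $\Delta^K=\{p\in[0,1]^K:\sum_k p_k=1\}$, $\operatorname{relint}(\Delta^K)=\Delta^K\cap(0,1)^K$. For $p\in(0,+\infty)^K$: $S_\alpha(p)=\frac{\sum_k p_k^\alpha}{\alpha(1-\alpha)}$ if $\alpha\notin\{0,1\}$, $S_0(p)=\sum_k\ln p_k$, $S_1(p)=-\sum_k p_k\ln p_k$. $\|x\|_1=\sum_k|x_k|$. *)

theory Defs
  imports "HOL-Analysis.Analysis"
begin

text \<open>Vectors in R^K are represented as functions nat => real; only the
coordinates 0..K-1 are relevant.\<close>

definition relint_simplex :: "nat \<Rightarrow> (nat \<Rightarrow> real) set" where
  "relint_simplex K = {p. (\<forall>k<K. 0 < p k \<and> p k < 1) \<and> (\<Sum>k<K. p k) = 1}"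

definition S :: "nat \<Rightarrow> real \<Rightarrow> (nat \<Rightarrow> real) \<Rightarrow> real" where
  "S K \<alpha> p =
     (if \<alpha> = 0 then (\<Sum>k<K. ln (p k))
      else if \<alpha> = 1 then - (\<Sum>k<K. p k * ln (p k))
      else (\<Sum>k<K. p k powr \<alpha>) / (\<alpha> * (1 - \<alpha>)))"

definition grad :: "((nat \<Rightarrow> real) \<Rightarrow> real) \<Rightarrow> (nat \<Rightarrow> real) \<Rightarrow> nat \<Rightarrow> real" where
  "grad f q k = deriv (\<lambda>t. f (q(k := t))) (q k)"

definition norm1 :: "nat \<Rightarrow> (nat \<Rightarrow> real) \<Rightarrow> real" where
  "norm1 K x = (\<Sum>k<K. \<bar>x k\<bar>)"

definition strongly_convex_relint :: "nat \<Rightarrow> ((nat \<Rightarrow> real) \<Rightarrow> real) \<Rightarrow> real \<Rightarrow> bool" where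
  "strongly_convex_relint K f c \<longleftrightarrow>
     (\<forall>p\<in>relint_simplex K. \<forall>q\<in>relint_simplex K.
        f p \<ge> f q + (\<Sum>k<K. grad f q k * (p k - q k))
               + c / 2 * (norm1 K (\<lambda>k. p k - q k))\<^sup>2)"

definition C :: "real \<Rightarrow> nat \<Rightarrow> real" where
  "C \<alpha> K =
     (if \<alpha> \<le> 1 then 2 powr (1 - \<alpha>)
      else if \<alpha> \<le> 2 then
        (if even K then real K powr (1 - \<alpha>)
         else real K powr (1 - \<alpha>) *
           ((((1 - 1 / real K) powr ((1 - \<alpha>) / (3 - \<alpha>))
              + (1 + 1 / real K) powr ((1 - \<alpha>) / (3 - \<alpha>))) / 2) powr (3 - \<alpha>)))
      else if K = 2 then 2 powr (1 - max \<alpha> 3)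
      else 0)"

end

theory Submission
  imports Defs
begin


definition phi :: "real \<Rightarrow> real \<Rightarrow> real" where
  "phi a t = (if a = 0 then - ln t else if a = 1 then t * ln t else - (t powr a) / (a * (1 - a)))"

definition dphi :: "real \<Rightarrow> real \<Rightarrow> real" where
  "dphi a t = (if a = 0 then - (1 / t) else if a = 1 then ln t + 1 else t powr (a - 1) / (a - 1))"

lemma phi_deriv: assumes "t > 0" shows "(phi a has_real_derivative dphi a t) (at t)"
proof -
  consider "a = 0" | "a = 1" | "a \<noteq> 0" "a \<noteq> 1" by blast
  then show ?thesis
  proof cases
    case 1
    have "((\<lambda>t. - ln t) has_real_derivative - (1/t)) (at t)"
      using assms by (auto intro!: derivative_eq_intros)
    then show ?thesis using 1 unfolding phi_def dphi_def by simp
  next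
    case 2
    have "((\<lambda>t. t * ln t) has_real_derivative ln t + 1) (at t)"
      using assms by (auto intro!: derivative_eq_intros)
    moreover have "phi a = (\<lambda>t. t * ln t)" "dphi a t = ln t + 1" using 2 by (auto simp: phi_def dphi_def fun_eq_iff)
    ultimately show ?thesis by simp
  next
    case 3
    have "((\<lambda>t. - (t powr a) / (a * (1 - a))) has_real_derivative - (a * t powr (a - 1)) / (a * (1 - a))) (at t)"
      using assms 3 by (auto intro!: derivative_eq_intros)
    moreover have "- (a * t powr (a - 1)) / (a * (1 - a)) = t powr (a - 1) / (a - 1)"
      using 3 by (simp add: field_simps)
    ultimately show ?thesis using 3 unfolding phi_def dphi_def by simp
  qed
qed

lemma dphi_deriv: assumes "t > 0" shows "(dphi a has_real_derivative t powr (a - 2)) (at t)"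
proof -
  consider "a = 0" | "a = 1" | "a \<noteq> 0" "a \<noteq> 1" by blast
  then show ?thesis
  proof cases
    case 1
    have "((\<lambda>t. - (1 / t)) has_real_derivative 1 / t^2) (at t)"
      using assms by (auto intro!: derivative_eq_intros simp: power2_eq_square)
    moreover have "1 / t^2 = t powr (a - 2)" using 1 assms
      by (simp add: powr_minus powr_realpow divide_inverse)
    ultimately show ?thesis using 1 unfolding dphi_def by simp
  next
    case 2
    have "((\<lambda>t. ln t + 1) has_real_derivative 1 / t) (at t)"
      using assms by (auto intro!: derivative_eq_intros)
    moreover have "1 / t = t powr (a - 2)" using 2 assms
      by (simp add: powr_minus divide_inverse)
    ultimately show ?thesis using 2 unfolding dphi_def by simp
  next
    case 3
    have "((\<lambda>t. t powr (a - 1) / (a - 1)) has_real_derivative ((a - 1) * t powr (a - 1 - 1)) / (a - 1)) (at t)"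
      using assms by (auto intro!: derivative_eq_intros)
    moreover have "((a - 1) * t powr (a - 1 - 1)) / (a - 1) = t powr (a - 2)"
      using 3 by (simp add: field_simps)
    ultimately show ?thesis using 3 unfolding dphi_def by simp
  qed
qed

lemma S_phi: "- S K a p = (\<Sum>k<K. phi a (p k))"
  unfolding S_def phi_def
  by (auto simp: sum_negf sum_divide_distrib)

lemma grad_phi:
  assumes "k < K" "q k > 0"
  shows "grad (\<lambda>p. - S K a p) q k = dphi a (q k)"
proof -
  have eq: "(\<lambda>t. - S K a (q(k := t))) = (\<lambda>t. phi a t + (\<Sum>j\<in>{..<K} - {k}. phi a (q j)))"
  proof
    fix t
    have "- S K a (q(k := t)) = (\<Sum>j<K. phi a ((q(k := t)) j))" by (rule S_phi)
    also have "\<dots> = phi a t + (\<Sum>j\<in>{..<K} - {k}. phi a ((q(k := t)) j))"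
      using assms(1) by (subst sum.remove[of _ k]) auto
    also have "(\<Sum>j\<in>{..<K} - {k}. phi a ((q(k := t)) j)) = (\<Sum>j\<in>{..<K} - {k}. phi a (q j))"
      by (rule sum.cong) auto
    finally show "- S K a (q(k := t)) = phi a t + (\<Sum>j\<in>{..<K} - {k}. phi a (q j))" .
  qed
  have "((\<lambda>t. phi a t + (\<Sum>j\<in>{..<K} - {k}. phi a (q j))) has_real_derivative dphi a (q k) + 0) (at (q k))"
    by (intro DERIV_add phi_deriv assms DERIV_const)
  then show ?thesis unfolding grad_def eq using DERIV_imp_deriv by fastforce
qed

lemma onedim_nonneg:
  fixes g g1 g2 :: "real \<Rightarrow> real"
  assumes "b \<ge> 0"
    and d1: "\<And>s. 0 \<le> s \<Longrightarrow> s \<le> b \<Longrightarrow> (g has_real_derivative g1 s) (at s)"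
    and d2: "\<And>s. 0 \<le> s \<Longrightarrow> s \<le> b \<Longrightarrow> (g1 has_real_derivative g2 s) (at s)"
    and "g 0 = 0" "g1 0 = 0"
    and pos: "\<And>s. 0 \<le> s \<Longrightarrow> s \<le> b \<Longrightarrow> g2 s \<ge> 0"
  shows "g b \<ge> 0"
proof -
  have g1pos: "g1 s \<ge> 0" if "0 \<le> s" "s \<le> b" for s
  proof -
    have "g1 0 \<le> g1 s"
    proof (rule DERIV_nonneg_imp_nondecreasing[of 0 s g1])
      fix x assume "0 \<le> x" "x \<le> s"
      then show "\<exists>y. DERIV g1 x :> y \<and> 0 \<le> y" using d2[of x] pos[of x] that by auto
    qed (rule that(1))
    then show ?thesis using assms by simp
  qed
  have "g 0 \<le> g b"
  proof (rule DERIV_nonneg_imp_nondecreasing[of 0 b g])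
    fix x assume "0 \<le> x" "x \<le> b"
    then show "\<exists>y. DERIV g x :> y \<and> 0 \<le> y" using d1[of x] g1pos[of x] by auto
  qed (rule assms(1))
  then show ?thesis using assms by simp
qed

lemma onedim_neg:
  fixes g g1 g2 :: "real \<Rightarrow> real"
  assumes "b > 0"
    and d1: "\<And>s. 0 \<le> s \<Longrightarrow> s \<le> b \<Longrightarrow> (g has_real_derivative g1 s) (at s)"
    and d2: "\<And>s. 0 \<le> s \<Longrightarrow> s \<le> b \<Longrightarrow> (g1 has_real_derivative g2 s) (at s)"
    and "g 0 = 0" "g1 0 = 0"
    and neg: "\<And>s. 0 \<le> s \<Longrightarrow> s \<le> b \<Longrightarrow> g2 s < 0"
  shows "g b < 0"
proof -
  have g1neg: "g1 s < 0" if "0 < s" "s \<le> b" for s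
  proof -
    have "g1 0 > g1 s"
    proof (rule DERIV_neg_imp_decreasing[of 0 s g1])
      fix x assume "0 \<le> x" "x \<le> s"
      then show "\<exists>y. DERIV g1 x :> y \<and> y < 0" using d2[of x] neg[of x] that by auto
    qed (rule that(1))
    then show ?thesis using assms by simp
  qed
  have "g 0 > g b"
  proof (rule DERIV_neg_imp_decreasing_open[of 0 b g])
    fix x assume "0 < x" "x < b"
    then show "\<exists>y. DERIV g x :> y \<and> y < 0" using d1[of x] g1neg[of x] by auto
  next
    show "continuous_on {0..b} g"
      by (rule DERIV_atLeastAtMost_imp_continuous_on) (use d1 in auto)
  qed (rule assms(1))
  then show ?thesis using assms by simp
qed



lemma seg_derivs:
  fixes q x :: "nat \<Rightarrow> real"
  assumes pos: "\<And>k. k < K \<Longrightarrow> q k + s * x k > 0"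
  shows "((\<lambda>s. \<Sum>k<K. phi a (q k + s * x k)) has_real_derivative (\<Sum>k<K. dphi a (q k + s * x k) * x k)) (at s)"
    and "((\<lambda>s. \<Sum>k<K. dphi a (q k + s * x k) * x k) has_real_derivative (\<Sum>k<K. (q k + s * x k) powr (a - 2) * (x k)\<^sup>2)) (at s)"
proof -
  show "((\<lambda>s. \<Sum>k<K. phi a (q k + s * x k)) has_real_derivative (\<Sum>k<K. dphi a (q k + s * x k) * x k)) (at s)"
  proof (rule DERIV_sum)
    fix k assume "k \<in> {..<K}"
    then have "q k + s * x k > 0" using pos by auto
    have "((\<lambda>s. q k + s * x k) has_real_derivative x k) (at s)"
      by (auto intro!: derivative_eq_intros)
    from DERIV_chain2[OF phi_deriv[OF \<open>q k + s * x k > 0\<close>] this]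
    show "((\<lambda>s. phi a (q k + s * x k)) has_real_derivative dphi a (q k + s * x k) * x k) (at s)" .
  qed
  show "((\<lambda>s. \<Sum>k<K. dphi a (q k + s * x k) * x k) has_real_derivative (\<Sum>k<K. (q k + s * x k) powr (a - 2) * (x k)\<^sup>2)) (at s)"
  proof (rule DERIV_sum)
    fix k assume "k \<in> {..<K}"
    then have "q k + s * x k > 0" using pos by auto
    have "((\<lambda>s. q k + s * x k) has_real_derivative x k) (at s)"
      by (auto intro!: derivative_eq_intros)
    from DERIV_chain2[OF dphi_deriv[OF \<open>q k + s * x k > 0\<close>] this]
    have "((\<lambda>s. dphi a (q k + s * x k)) has_real_derivative (q k + s * x k) powr (a - 2) * x k) (at s)" .
    then have "((\<lambda>s. dphi a (q k + s * x k) * x k) has_real_derivative (q k + s * x k) powr (a - 2) * x k * x k) (at s)"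
      by (rule DERIV_cmult_right)
    then show "((\<lambda>s. dphi a (q k + s * x k) * x k) has_real_derivative (q k + s * x k) powr (a - 2) * (x k)\<^sup>2) (at s)"
      by (simp add: power2_eq_square mult.assoc)
  qed
qed

lemma bregman_eq:
  assumes "q \<in> relint_simplex K"
  shows "(\<Sum>k<K. grad (\<lambda>p. - S K a p) q k * (p k - q k)) = (\<Sum>k<K. dphi a (q k) * (p k - q k))"
  using assms grad_phi by (intro sum.cong) (auto simp: relint_simplex_def)

lemma sc_from_hess:
  assumes key: "\<And>r x. (\<And>k. k < K \<Longrightarrow> r k > 0) \<Longrightarrow> (\<Sum>k<K. r k) = 1 \<Longrightarrow> (\<Sum>k<K. x k) = 0
      \<Longrightarrow> c * (norm1 K x)\<^sup>2 \<le> (\<Sum>k<K. r k powr (a - 2) * (x k)\<^sup>2)"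
  shows "strongly_convex_relint K (\<lambda>p. - S K a p) c"
  unfolding strongly_convex_relint_def
proof (intro ballI)
  fix p q assume p: "p \<in> relint_simplex K" and q: "q \<in> relint_simplex K"
  define x where "x k = p k - q k" for k
  define N where "N = norm1 K x"
  define h where "h s = (\<Sum>k<K. phi a (q k + s * x k))" for s
  define h1 where "h1 s = (\<Sum>k<K. dphi a (q k + s * x k) * x k)" for s
  define h2 where "h2 s = (\<Sum>k<K. (q k + s * x k) powr (a - 2) * (x k)\<^sup>2)" for s
  define g where "g s = h s - h 0 - s * h1 0 - c / 2 * N\<^sup>2 * s\<^sup>2" for s
  define g1 where "g1 s = h1 s - h1 0 - c * N\<^sup>2 * s" for s
  define g2 where "g2 s = h2 s - c * N\<^sup>2" for s
  have pos: "q k + s * x k > 0" if "0 \<le> s" "s \<le> 1" "k < K" for s k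
  proof -
    have "q k + s * x k = (1 - s) * q k + s * p k" by (simp add: x_def algebra_simps)
    moreover have "q k > 0" "p k > 0" using p q that by (auto simp: relint_simplex_def)
    ultimately show ?thesis using that
      by (smt (verit, ccfv_SIG) mult_nonneg_nonneg mult_pos_pos)
  qed
  have sx: "(\<Sum>k<K. x k) = 0" using p q by (simp add: x_def sum_subtractf relint_simplex_def)
  have "g 1 \<ge> 0"
  proof (rule onedim_nonneg[of 1 g g1 g2])
    fix s :: real assume s: "0 \<le> s" "s \<le> 1"
    note d = seg_derivs[of K q s x a, OF pos[OF s]]
    show "(g has_real_derivative g1 s) (at s)"
      unfolding g_def g1_def h_def[abs_def] h1_def
      by (rule derivative_eq_intros d(1) refl | simp)+
    show "(g1 has_real_derivative g2 s) (at s)"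
      unfolding g1_def g2_def h1_def[abs_def] h2_def
      by (rule derivative_eq_intros d(2) refl | simp)+
    have "c * (norm1 K x)\<^sup>2 \<le> (\<Sum>k<K. (q k + s * x k) powr (a - 2) * (x k)\<^sup>2)"
    proof (rule key)
      show "(\<Sum>k<K. q k + s * x k) = 1" using q sx
        by (simp add: sum.distrib sum_distrib_left[symmetric] relint_simplex_def)
    qed (use pos s sx in auto)
    then show "g2 s \<ge> 0" unfolding g2_def h2_def N_def by simp
  qed (auto simp: g_def g1_def)
  moreover have "h 1 = - S K a p" "h 0 = - S K a q"
    by (simp_all add: h_def x_def S_phi)
  moreover have "h1 0 = (\<Sum>k<K. grad (\<lambda>p. - S K a p) q k * (p k - q k))"
    using bregman_eq[OF q] by (simp add: h1_def x_def)
  ultimately show "- S K a q + (\<Sum>k<K. grad (\<lambda>p. - S K a p) q k * (p k - q k)) + c / 2 * (norm1 K (\<lambda>k. p k - q k))\<^sup>2 \<le> - S K a p"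
    by (simp add: g_def N_def x_def[abs_def])
qed

lemma hess_from_sc:
  assumes sc: "strongly_convex_relint K (\<lambda>p. - S K a p) c"
    and r: "r \<in> relint_simplex K" and sx: "(\<Sum>k<K. x k) = 0"
  shows "c * (norm1 K x)\<^sup>2 \<le> (\<Sum>k<K. r k powr (a - 2) * (x k)\<^sup>2)"
proof (rule ccontr)
  define N where "N = norm1 K x"
  assume "\<not> ?thesis"
  then have lt: "(\<Sum>k<K. r k powr (a - 2) * (x k)\<^sup>2) - c * N\<^sup>2 < 0" by (simp add: N_def)
  define h where "h s = (\<Sum>k<K. phi a (r k + s * x k))" for s
  define h1 where "h1 s = (\<Sum>k<K. dphi a (r k + s * x k) * x k)" for s
  define h2 where "h2 s = (\<Sum>k<K. (r k + s * x k) powr (a - 2) * (x k)\<^sup>2)" for s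
  define g where "g s = h s - h 0 - s * h1 0 - c / 2 * N\<^sup>2 * s\<^sup>2" for s
  define g1 where "g1 s = h1 s - h1 0 - c * N\<^sup>2 * s" for s
  define g2 where "g2 s = h2 s - c * N\<^sup>2" for s
  have rpos: "r k > 0" "r k < 1" if "k < K" for k using r that by (auto simp: relint_simplex_def)
  have ev1: "\<forall>\<^sub>F s in nhds 0. g2 s < 0"
  proof -
    have "isCont g2 0" unfolding g2_def h2_def
      apply (intro continuous_intros)
      using rpos(1) by (auto simp: order_less_imp_not_eq2)
    then have "(g2 \<longlongrightarrow> g2 0) (nhds 0)" by (simp add: isCont_def tendsto_nhds_iff)
    moreover have "g2 0 < 0" using lt by (simp add: g2_def h2_def)
    ultimately show ?thesis using order_tendstoD(2) by blast
  qed
  have ev2: "\<forall>\<^sub>F s in nhds 0. \<forall>k\<in>{..<K}. 0 < r k + s * x k \<and> r k + s * x k < 1"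
  proof (rule eventually_ball_finite, simp, intro ballI)
    fix k assume "k \<in> {..<K}"
    then have "r k > 0" "r k < 1" using rpos by auto
    have "((\<lambda>s. r k + s * x k) \<longlongrightarrow> r k + 0 * x k) (nhds 0)"
      by (intro tendsto_intros) (rule filterlim_ident)
    then have t: "((\<lambda>s. r k + s * x k) \<longlongrightarrow> r k) (nhds 0)" by simp
    show "\<forall>\<^sub>F s in nhds 0. 0 < r k + s * x k \<and> r k + s * x k < 1"
      using order_tendstoD(1)[OF t \<open>r k > 0\<close>] order_tendstoD(2)[OF t \<open>r k < 1\<close>]
      by (simp add: eventually_conj_iff)
  qed
  obtain d where d: "d > 0" and dP: "\<And>s. dist s 0 < d \<Longrightarrow> g2 s < 0 \<and> (\<forall>k\<in>{..<K}. 0 < r k + s * x k \<and> r k + s * x k < 1)"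
    using eventually_conj[OF ev1 ev2] unfolding eventually_nhds_metric by blast
  define b where "b = d / 2"
  have b: "b > 0" "b < d" using d by (auto simp: b_def)
  have inS: "0 \<le> s \<Longrightarrow> s \<le> b \<Longrightarrow> g2 s < 0 \<and> (\<forall>k\<in>{..<K}. 0 < r k + s * x k \<and> r k + s * x k < 1)" for s
    using dP[of s] b by auto
  have "g b < 0"
  proof (rule onedim_neg[of b g g1 g2])
    fix s :: real assume s: "0 \<le> s" "s \<le> b"
    have ps: "\<And>k. k < K \<Longrightarrow> r k + s * x k > 0" using inS[OF s] by auto
    note dd = seg_derivs[of K r s x a, OF ps]
    show "(g has_real_derivative g1 s) (at s)"
      unfolding g_def g1_def h_def[abs_def] h1_def
      by (rule derivative_eq_intros dd(1) refl | simp)+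
    show "(g1 has_real_derivative g2 s) (at s)"
      unfolding g1_def g2_def h1_def[abs_def] h2_def
      by (rule derivative_eq_intros dd(2) refl | simp)+
    show "g2 s < 0" using inS[OF s] by simp
  qed (auto simp: g_def g1_def b)
  moreover define p where "p k = r k + b * x k" for k
  have p: "p \<in> relint_simplex K"
  proof -
    have "(\<Sum>k<K. p k) = 1" using r sx
      by (simp add: p_def sum.distrib sum_distrib_left[symmetric] relint_simplex_def)
    then show ?thesis using inS[of b] b unfolding relint_simplex_def p_def by auto
  qed
  have "- S K a r + (\<Sum>k<K. grad (\<lambda>p. - S K a p) r k * (p k - r k)) + c / 2 * (norm1 K (\<lambda>k. p k - r k))\<^sup>2 \<le> - S K a p"
    using sc p r unfolding strongly_convex_relint_def by blast
  moreover have "h b = - S K a p" "h 0 = - S K a r"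
    by (simp_all add: h_def p_def S_phi)
  moreover have "(\<Sum>k<K. grad (\<lambda>p. - S K a p) r k * (p k - r k)) = b * h1 0"
  proof -
    have "(\<Sum>k<K. grad (\<lambda>p. - S K a p) r k * (p k - r k)) = (\<Sum>k<K. dphi a (r k) * (p k - r k))"
      by (rule bregman_eq[OF r])
    also have "\<dots> = b * h1 0" by (simp add: h1_def p_def sum_distrib_left mult_ac)
    finally show ?thesis .
  qed
  moreover have "norm1 K (\<lambda>k. p k - r k) = b * N"
    using b by (simp add: norm1_def N_def p_def abs_mult sum_distrib_left)
  ultimately show False
    by (simp add: g_def power_mult_distrib algebra_simps)
qed



lemma cs_weight:
  fixes v x :: "nat \<Rightarrow> real"
  assumes "\<And>k. k \<in> P \<Longrightarrow> v k > 0"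
  shows "(\<Sum>k\<in>P. x k)\<^sup>2 \<le> (\<Sum>k\<in>P. v k) * (\<Sum>k\<in>P. (x k)\<^sup>2 / v k)"
proof -
  have nz: "v k \<noteq> 0" if "k \<in> P" for k using assms[OF that] by simp
  have "(\<Sum>k\<in>P. sqrt (v k) * (x k / sqrt (v k)))\<^sup>2 \<le> (\<Sum>k\<in>P. (sqrt (v k))\<^sup>2) * (\<Sum>k\<in>P. (x k / sqrt (v k))\<^sup>2)"
    by (rule Cauchy_Schwarz_ineq_sum)
  moreover have "(\<Sum>k\<in>P. sqrt (v k) * (x k / sqrt (v k))) = (\<Sum>k\<in>P. x k)"
    using nz by (intro sum.cong) auto
  moreover have "(\<Sum>k\<in>P. (sqrt (v k))\<^sup>2) = (\<Sum>k\<in>P. v k)"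
    using assms by (intro sum.cong) (auto simp: less_imp_le)
  moreover have "(\<Sum>k\<in>P. (x k / sqrt (v k))\<^sup>2) = (\<Sum>k\<in>P. (x k)\<^sup>2 / v k)"
    using assms by (intro sum.cong) (auto simp: power_divide less_imp_le)
  ultimately show ?thesis by simp
qed

lemma cs_weight':
  fixes v x :: "nat \<Rightarrow> real"
  assumes "\<And>k. k \<in> P \<Longrightarrow> v k > 0" "(\<Sum>k\<in>P. v k) > 0"
  shows "(\<Sum>k\<in>P. x k)\<^sup>2 / (\<Sum>k\<in>P. v k) \<le> (\<Sum>k\<in>P. (x k)\<^sup>2 / v k)"
  using cs_weight[OF assms(1), where x=x] assms(2) by (simp add: divide_le_eq mult.commute)

lemma key_reduce:
  fixes r x :: "nat \<Rightarrow> real"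
  assumes rpos: "\<And>k. k < K \<Longrightarrow> r k > 0" and sx: "(\<Sum>k<K. x k) = 0"
    and cond: "\<And>P N. P \<subseteq> {..<K} \<Longrightarrow> N \<subseteq> {..<K} \<Longrightarrow> P \<inter> N = {} \<Longrightarrow> P \<noteq> {} \<Longrightarrow> N \<noteq> {} \<Longrightarrow>
        4 * c \<le> 1 / (\<Sum>k\<in>P. r k powr (2 - a)) + 1 / (\<Sum>k\<in>N. r k powr (2 - a))"
  shows "c * (norm1 K x)\<^sup>2 \<le> (\<Sum>k<K. r k powr (a - 2) * (x k)\<^sup>2)"
proof -
  define P where "P = {k\<in>{..<K}. 0 < x k}"
  define N where "N = {k\<in>{..<K}. x k < 0}"
  define Z where "Z = {k\<in>{..<K}. x k = 0}"
  define v where "v k = r k powr (2 - a)" for k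
  have fin: "finite P" "finite N" "finite Z" by (auto simp: P_def N_def Z_def)
  have U: "{..<K} = P \<union> N \<union> Z" by (auto simp: P_def N_def Z_def)
  have D: "P \<inter> N = {}" "(P \<union> N) \<inter> Z = {}" by (auto simp: P_def N_def Z_def)
  have split: "(\<Sum>k<K. f k) = (\<Sum>k\<in>P. f k) + (\<Sum>k\<in>N. f k) + (\<Sum>k\<in>Z. f k)" for f :: "nat \<Rightarrow> real"
    unfolding U using fin D by (simp add: sum.union_disjoint)
  define s where "s = (\<Sum>k\<in>P. x k)"
  have sZ: "(\<Sum>k\<in>Z. f k * x k) = 0" for f :: "nat \<Rightarrow> real" by (auto simp: Z_def)
  have sN: "(\<Sum>k\<in>N. x k) = - s"
    using sx split[of x] by (simp add: s_def Z_def)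
  have n1: "norm1 K x = 2 * s"
  proof -
    have "norm1 K x = (\<Sum>k\<in>P. \<bar>x k\<bar>) + (\<Sum>k\<in>N. \<bar>x k\<bar>) + (\<Sum>k\<in>Z. \<bar>x k\<bar>)"
      unfolding norm1_def by (rule split)
    also have "(\<Sum>k\<in>P. \<bar>x k\<bar>) = s" unfolding s_def by (intro sum.cong) (auto simp: P_def)
    also have "(\<Sum>k\<in>N. \<bar>x k\<bar>) = - (\<Sum>k\<in>N. x k)"
      by (simp add: sum_negf[symmetric]) (intro sum.cong, auto simp: N_def)
    also have "(\<Sum>k\<in>Z. \<bar>x k\<bar>) = 0" by (auto simp: Z_def)
    finally show ?thesis using sN by simp
  qed
  have wv: "r k powr (a - 2) * (x k)\<^sup>2 = (x k)\<^sup>2 / v k" if "k < K" for k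
  proof -
    have "r k powr (a - 2) = inverse (r k powr (2 - a))"
      using powr_minus[of "r k" "2 - a"] by simp
    then show ?thesis by (simp add: v_def divide_inverse mult.commute)
  qed
  have vpos: "v k > 0" if "k < K" for k using rpos[OF that] by (simp add: v_def)
  have H: "(\<Sum>k<K. r k powr (a - 2) * (x k)\<^sup>2) = (\<Sum>k\<in>P. (x k)\<^sup>2 / v k) + (\<Sum>k\<in>N. (x k)\<^sup>2 / v k)"
  proof -
    have "(\<Sum>k<K. r k powr (a - 2) * (x k)\<^sup>2) = (\<Sum>k<K. (x k)\<^sup>2 / v k)"
      using wv by (intro sum.cong) auto
    also have "\<dots> = (\<Sum>k\<in>P. (x k)\<^sup>2 / v k) + (\<Sum>k\<in>N. (x k)\<^sup>2 / v k) + (\<Sum>k\<in>Z. (x k)\<^sup>2 / v k)"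
      by (rule split)
    also have "(\<Sum>k\<in>Z. (x k)\<^sup>2 / v k) = 0" by (auto simp: Z_def)
    finally show ?thesis by simp
  qed
  have Hnn: "0 \<le> (\<Sum>k<K. r k powr (a - 2) * (x k)\<^sup>2)"
    by (intro sum_nonneg) auto
  show ?thesis
  proof (cases "P = {} \<or> N = {}")
    case True
    then have "s = 0" using sN by (auto simp: s_def)
    then show ?thesis using n1 Hnn by simp
  next
    case False
    have PK: "P \<subseteq> {..<K}" "N \<subseteq> {..<K}" by (auto simp: P_def N_def)
    have Apos: "(\<Sum>k\<in>P. v k) > 0" using False fin PK vpos by (intro sum_pos) auto
    have Bpos: "(\<Sum>k\<in>N. v k) > 0" using False fin PK vpos by (intro sum_pos) auto
    have c4: "4 * c \<le> 1 / (\<Sum>k\<in>P. v k) + 1 / (\<Sum>k\<in>N. v k)"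
      using cond[OF PK D(1)] False by (simp add: v_def)
    have h1: "s\<^sup>2 / (\<Sum>k\<in>P. v k) \<le> (\<Sum>k\<in>P. (x k)\<^sup>2 / v k)"
      unfolding s_def using PK vpos Apos by (intro cs_weight') auto
    have h2: "s\<^sup>2 / (\<Sum>k\<in>N. v k) \<le> (\<Sum>k\<in>N. (x k)\<^sup>2 / v k)"
      using cs_weight'[of N v x] PK vpos Bpos sN by auto
    have "c * (norm1 K x)\<^sup>2 = s\<^sup>2 * (4 * c)" by (simp add: n1 power2_eq_square)
    also have "\<dots> \<le> s\<^sup>2 * (1 / (\<Sum>k\<in>P. v k) + 1 / (\<Sum>k\<in>N. v k))"
      by (rule mult_left_mono[OF c4]) simp
    also have "\<dots> = s\<^sup>2 / (\<Sum>k\<in>P. v k) + s\<^sup>2 / (\<Sum>k\<in>N. v k)" by (simp add: field_simps)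
    also have "\<dots> \<le> (\<Sum>k<K. r k powr (a - 2) * (x k)\<^sup>2)" using h1 h2 H by simp
    finally show ?thesis .
  qed
qed



lemma pospow: "(x::real) > 0 \<Longrightarrow> x powr b > 0" by simp

lemma subset_sum_le1:
  fixes r :: "nat \<Rightarrow> real"
  assumes rpos: "\<And>k. k < K \<Longrightarrow> r k > 0" and s1: "(\<Sum>k<K. r k) = 1"
    and PN: "P \<subseteq> {..<K}" "N \<subseteq> {..<K}" "P \<inter> N = {}"
  shows "(\<Sum>k\<in>P. r k) + (\<Sum>k\<in>N. r k) \<le> 1"
proof -
  have fin: "finite P" "finite N" using PN finite_subset by blast+
  have "(\<Sum>k\<in>P. r k) + (\<Sum>k\<in>N. r k) = (\<Sum>k\<in>P \<union> N. r k)"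
    using fin PN by (simp add: sum.union_disjoint)
  also have "\<dots> \<le> (\<Sum>k<K. r k)"
    using PN rpos by (intro sum_mono2) (auto simp: less_imp_le)
  finally show ?thesis using s1 by simp
qed

lemma superadd_powr:
  fixes r :: "nat \<Rightarrow> real"
  assumes fin: "finite P" and rpos: "\<And>k. k \<in> P \<Longrightarrow> r k > 0" and b: "b \<ge> 1"
  shows "(\<Sum>k\<in>P. r k powr b) \<le> (\<Sum>k\<in>P. r k) powr b"
proof -
  define s where "s = (\<Sum>k\<in>P. r k)"
  have "r k powr b \<le> r k * s powr (b - 1)" if "k \<in> P" for k
  proof -
    have "r k powr b = r k * r k powr (b - 1)"
      using rpos[OF that] powr_add[of "r k" 1 "b - 1"] by simp
    also have "\<dots> \<le> r k * s powr (b - 1)"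
    proof (rule mult_left_mono)
      have "r k \<le> s" unfolding s_def using fin that rpos by (intro member_le_sum) (auto simp: less_imp_le)
      then show "r k powr (b - 1) \<le> s powr (b - 1)"
        using b rpos[OF that] by (intro powr_mono2) auto
    qed (use rpos[OF that] in simp)
    finally show ?thesis .
  qed
  then have "(\<Sum>k\<in>P. r k powr b) \<le> (\<Sum>k\<in>P. r k * s powr (b - 1))" by (rule sum_mono)
  also have "\<dots> = s * s powr (b - 1)" by (simp add: s_def sum_distrib_right)
  also have "\<dots> = s powr b"
  proof (cases "P = {}")
    case True then show ?thesis by (simp add: s_def)
  next
    case False
    then have "s > 0" unfolding s_def using fin rpos by (intro sum_pos) auto
    then show ?thesis using powr_add[of s 1 "b - 1"] by simp
  qed
  finally show ?thesis by (simp add: s_def)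
qed

lemma cond_a:
  fixes r :: "nat \<Rightarrow> real"
  assumes a: "a \<le> 1" and rpos: "\<And>k. k < K \<Longrightarrow> r k > 0" and s1: "(\<Sum>k<K. r k) = 1"
    and PN: "P \<subseteq> {..<K}" "N \<subseteq> {..<K}" "P \<inter> N = {}" "P \<noteq> {}" "N \<noteq> {}"
  shows "4 * 2 powr (1 - a) \<le> 1 / (\<Sum>k\<in>P. r k powr (2 - a)) + 1 / (\<Sum>k\<in>N. r k powr (2 - a))"
proof -
  define b where "b = 2 - a"
  have b1: "b \<ge> 1" using a by (simp add: b_def)
  have fin: "finite P" "finite N" using PN finite_subset by blast+
  have rP: "r k > 0" if "k \<in> P" for k using PN that rpos by auto
  have rN: "r k > 0" if "k \<in> N" for k using PN that rpos by auto
  define x where "x = (\<Sum>k\<in>P. r k)"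
  define y where "y = (\<Sum>k\<in>N. r k)"
  have xpos: "x > 0" unfolding x_def using fin PN rpos by (intro sum_pos) auto
  have ypos: "y > 0" unfolding y_def using fin PN rpos by (intro sum_pos) auto
  have xy: "x + y \<le> 1" unfolding x_def y_def by (rule subset_sum_le1[OF rpos s1 PN(1-3)])
  have Apos: "(\<Sum>k\<in>P. r k powr b) > 0" using rP pospow by (intro sum_pos[OF fin(1) PN(4)]) blast
  have Bpos: "(\<Sum>k\<in>N. r k powr b) > 0" using rN pospow by (intro sum_pos[OF fin(2) PN(5)]) blast
  have A: "(\<Sum>k\<in>P. r k powr b) \<le> x powr b" unfolding x_def
    using fin rP b1 by (intro superadd_powr) auto
  have B: "(\<Sum>k\<in>N. r k powr b) \<le> y powr b" unfolding y_def
    using fin rN b1 by (intro superadd_powr) auto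
  define u where "u = 1 / x powr b"
  define v where "v = 1 / y powr b"
  have u: "u \<le> 1 / (\<Sum>k\<in>P. r k powr b)" unfolding u_def using A Apos xpos by (intro divide_left_mono) auto
  have v: "v \<le> 1 / (\<Sum>k\<in>N. r k powr b)" unfolding v_def using B Bpos ypos by (intro divide_left_mono) auto
  have xy4: "x * y \<le> 1 / 4"
  proof -
    have e: "(x + y)\<^sup>2 - 4 * (x * y) = (x - y)\<^sup>2" by (simp add: power2_eq_square algebra_simps)
    have "4 * (x * y) \<le> (x + y)\<^sup>2" using e zero_le_power2[of "x - y"] by linarith
    also have "\<dots> \<le> 1" using xy xpos ypos by (simp add: power_le_one)
    finally show ?thesis by simp
  qed
  have "(x * y) powr b \<le> (1 / 4) powr b" using xy4 xpos ypos b1 by (intro powr_mono2) auto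
  also have "(1 / 4) powr b = 1 / 4 powr b" by (simp add: powr_divide)
  finally have le: "(x * y) powr b \<le> 1 / 4 powr b" .
  have xyp: "(x * y) powr b > 0" using xpos ypos by simp
  have "u * v = 1 / (x * y) powr b" by (simp add: u_def v_def powr_mult)
  also have "\<dots> \<ge> 1 / (1 / 4 powr b)" using le xyp by (intro divide_left_mono) auto
  finally have "u * v \<ge> 4 powr b" by simp
  have q: "(2 * 2 powr b)\<^sup>2 = 4 * 4 powr b"
    by (simp add: power2_eq_square powr_mult[symmetric])
  have e2: "(u + v)\<^sup>2 - 4 * (u * v) = (u - v)\<^sup>2" by (simp add: power2_eq_square algebra_simps)
  have uv: "(u + v)\<^sup>2 \<ge> 4 * (u * v)" using e2 zero_le_power2[of "u - v"] by linarith
  have "(2 * 2 powr b)\<^sup>2 \<le> (u + v)\<^sup>2" using q uv \<open>u * v \<ge> 4 powr b\<close> by simp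
  then have "2 * 2 powr b \<le> u + v"
  proof (rule power2_le_imp_le)
    have "u \<ge> 0" "v \<ge> 0" by (simp_all add: u_def v_def)
    then show "0 \<le> u + v" by linarith
  qed
  moreover have "4 * 2 powr (1 - a) = 2 * 2 powr b"
  proof -
    have "4 * 2 powr (1 - a) = 4 * 2 powr (b - 1)" by (simp add: b_def)
    also have "\<dots> = 2 * 2 powr b" by (simp add: powr_diff)
    finally show ?thesis .
  qed
  ultimately show ?thesis unfolding b_def[symmetric] using u v by linarith
qed



lemma young_sum:
  fixes r :: "nat \<Rightarrow> real"
  assumes fin: "finite P" and ne: "P \<noteq> {}" and rpos: "\<And>k. k \<in> P \<Longrightarrow> r k > 0"
    and b0: "0 \<le> b" and b1: "b \<le> 1"
  shows "(\<Sum>k\<in>P. r k powr b) \<le> real (card P) powr (1 - b) * (\<Sum>k\<in>P. r k) powr b"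
proof -
  define m where "m = real (card P)"
  define s where "s = (\<Sum>k\<in>P. r k)"
  have m: "m > 0" using fin ne by (simp add: m_def card_gt_0_iff)
  have s: "s > 0" unfolding s_def using rpos by (intro sum_pos[OF fin ne])
  define t where "t = s / m"
  have t: "t > 0" using m s by (simp add: t_def)
  have "r k powr b * t powr (1 - b) \<le> b * r k + (1 - b) * t" if "k \<in> P" for k
    using Youngs_inequality_0[of b "1 - b" "r k" t] b0 b1 t rpos[OF that] by simp
  then have "(\<Sum>k\<in>P. r k powr b * t powr (1 - b)) \<le> (\<Sum>k\<in>P. b * r k + (1 - b) * t)"
    by (rule sum_mono)
  also have "\<dots> = b * s + (1 - b) * (m * t)"
    by (simp add: sum.distrib sum_distrib_left s_def m_def)
  also have "\<dots> = s" using m by (simp add: t_def algebra_simps)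
  finally have le: "(\<Sum>k\<in>P. r k powr b) * t powr (1 - b) \<le> s"
    by (simp add: sum_distrib_right)
  have tp: "t powr (1 - b) > 0" using t by simp
  have "(\<Sum>k\<in>P. r k powr b) \<le> s / t powr (1 - b)"
    using le tp by (simp add: pos_le_divide_eq)
  also have "s / t powr (1 - b) = m powr (1 - b) * s powr b"
  proof -
    have "t powr (1 - b) = s powr (1 - b) / m powr (1 - b)" by (simp add: t_def powr_divide)
    moreover have "s = s powr b * s powr (1 - b)"
      using s powr_add[of s b "1 - b"] by simp
    moreover have "s powr (1 - b) > 0" "m powr (1 - b) > 0" using s m by simp_all
    ultimately show ?thesis
    proof -
      assume a1: "t powr (1 - b) = s powr (1 - b) / m powr (1 - b)"
        and a2: "s = s powr b * s powr (1 - b)" and a3: "s powr (1 - b) > 0" "m powr (1 - b) > 0"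
      define A where "A = s powr (1 - b)"
      define B where "B = m powr (1 - b)"
      define Cc where "Cc = s powr b"
      have "A > 0" "B > 0" using a3 by (simp_all add: A_def B_def)
      moreover have "s = Cc * A" using a2 by (simp add: A_def Cc_def)
      ultimately have "s / (A / B) = B * Cc" by (simp add: field_simps)
      then show ?thesis using a1 by (simp add: A_def B_def Cc_def)
    qed
  qed
  finally show ?thesis by (simp add: m_def s_def)
qed

lemma scale_powr_id:
  fixes z W b :: real
  assumes "z > 0"
  shows "z * (W / z) powr (1 + b) = W powr (1 + b) / z powr b"
proof -
  have "z powr (1 + b) = z * z powr b" using assms powr_add[of z 1 b] by simp
  moreover have "z powr b > 0" using assms by simp
  ultimately show ?thesis using assms by (simp add: powr_divide)
qed

lemma mult_through_aux:
  fixes x y A B C :: real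
  assumes "x > 0" "y > 0" "C \<le> x / (x + y) * A + y / (x + y) * B"
  shows "(x + y) * C \<le> x * A + y * B"
proof -
  have "(x + y) * C \<le> (x + y) * (x / (x + y) * A + y / (x + y) * B)"
    using assms by (intro mult_left_mono) auto
  also have "\<dots> = x * A + y * B"
  proof -
    have xy0: "x + y \<noteq> 0" using assms by simp
    have h: "(x + y) * (x / (x + y)) = x" "(x + y) * (y / (x + y)) = y" using xy0 by simp_all
    have "(x + y) * (x / (x + y) * A + y / (x + y) * B) = ((x + y) * (x / (x + y))) * A + ((x + y) * (y / (x + y))) * B"
      by (simp only: distrib_left mult.assoc)
    then show ?thesis unfolding h .
  qed
  finally show ?thesis .
qed

lemma radon:
  fixes U V x y b :: real
  assumes U: "U > 0" and V: "V > 0" and x: "x > 0" and y: "y > 0" and b: "b \<ge> 0"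
  shows "(U + V) powr (1 + b) / (x + y) powr b \<le> U powr (1 + b) / x powr b + V powr (1 + b) / y powr b"
proof -
  define f where "f = (\<lambda>z::real. z powr (1 + b))"
  define t where "t = y / (x + y)"
  have t0: "t \<ge> 0" "t \<le> 1" using x y by (auto simp: t_def)
  have cv: "convex_on {0<..} f" unfolding f_def using b by (intro powr_convex) simp
  have inS: "U / x \<in> {0<..}" "V / y \<in> {0<..}" using U V x y by auto
  have c1: "f ((1 - t) *\<^sub>R (U / x) + t *\<^sub>R (V / y)) \<le> (1 - t) * f (U / x) + t * f (V / y)"
    by (rule convex_onD[OF cv t0 inS])
  have xy0: "x + y \<noteq> 0" using x y by simp
  have e2: "1 - t = x / (x + y)" using x y xy0 by (simp add: t_def field_simps)
  have e1: "(1 - t) *\<^sub>R (U / x) + t *\<^sub>R (V / y) = (U + V) / (x + y)"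
  proof -
    have "x / (x + y) * (U / x) = U / (x + y)" "y / (x + y) * (V / y) = V / (x + y)"
      using x y by simp_all
    then show ?thesis unfolding e2 by (simp add: t_def add_divide_distrib)
  qed
  have "f ((U + V) / (x + y)) \<le> x / (x + y) * f (U / x) + y / (x + y) * f (V / y)"
  proof -
    from c1 have "f ((U + V) / (x + y)) \<le> (1 - t) * f (U / x) + t * f (V / y)" by (simp only: e1)
    then have "f ((U + V) / (x + y)) \<le> x / (x + y) * f (U / x) + t * f (V / y)" by (simp only: e2)
    then show ?thesis by (simp only: t_def)
  qed
  then have "(x + y) * f ((U + V) / (x + y)) \<le> x * f (U / x) + y * f (V / y)"
    by (rule mult_through_aux[OF x y])
  moreover have "(x + y) * f ((U + V) / (x + y)) = (U + V) powr (1 + b) / (x + y) powr b"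
    unfolding f_def using x y by (intro scale_powr_id) simp
  moreover have "x * f (U / x) = U powr (1 + b) / x powr b"
    unfolding f_def using x by (intro scale_powr_id) simp
  moreover have "y * f (V / y) = V powr (1 + b) / y powr b"
    unfolding f_def using y by (intro scale_powr_id) simp
  ultimately show ?thesis by simp
qed

lemma convex_powr_neg:
  fixes e :: real
  assumes "e \<le> 0"
  shows "convex_on {0<..} (\<lambda>t. t powr e)"
proof (rule f''_ge0_imp_convex[where f' = "\<lambda>t. e * t powr (e - 1)" and f'' = "\<lambda>t. e * ((e - 1) * t powr (e - 1 - 1))"])
  fix t :: real assume "t \<in> {0<..}"
  then have t: "t > 0" by simp
  show "((\<lambda>t. t powr e) has_real_derivative e * t powr (e - 1)) (at t)"
    using t by (auto intro!: derivative_eq_intros)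
  show "((\<lambda>t. e * t powr (e - 1)) has_real_derivative e * ((e - 1) * t powr (e - 1 - 1))) (at t)"
    using t by (auto intro!: derivative_eq_intros)
  have "e * (e - 1) \<ge> 0" using assms by (simp add: mult_nonpos_nonpos)
  then show "0 \<le> e * ((e - 1) * t powr (e - 1 - 1))"
    using t by (simp add: mult.assoc[symmetric])
qed simp

lemma karamata2:
  fixes f :: "real \<Rightarrow> real"
  assumes cv: "convex_on {0<..} f" and x: "x > 0" and xy: "x \<le> y" and zw: "z \<le> w" and yz: "y \<le> z"
    and sum: "x + w = y + z"
  shows "f y + f z \<le> f x + f w"
proof (cases "x = w")
  case True
  then have "y = x" "z = x" using xy zw yz by auto
  then show ?thesis using True by simp
next
  case False
  then have xw: "x < w" using xy yz zw by simp
  define t where "t = (y - x) / (w - x)"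
  have t0: "t \<ge> 0" "t \<le> 1"
  proof -
    show "t \<ge> 0" unfolding t_def using xw xy by (intro divide_nonneg_nonneg) auto
    have "y - x \<le> w - x" using yz zw by linarith
    then show "t \<le> 1" unfolding t_def using xw by (simp add: divide_le_eq_1_pos)
  qed
  have tw: "t * (w - x) = y - x" using xw by (simp add: t_def)
  have "(1 - t) * x + t * w = y" using tw by (simp add: algebra_simps)
  then have ye: "y = (1 - t) *\<^sub>R x + t *\<^sub>R w" by simp
  have "(1 - (1 - t)) * x + (1 - t) * w = z" using tw sum by (simp add: algebra_simps)
  then have ze: "z = (1 - (1 - t)) *\<^sub>R x + (1 - t) *\<^sub>R w" by simp
  have inS: "x \<in> {0<..}" "w \<in> {0<..}" using x xw by auto
  have "f y \<le> (1 - t) * f x + t * f w" unfolding ye by (rule convex_onD[OF cv t0 inS])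
  moreover have "f z \<le> (1 - (1 - t)) * f x + (1 - t) * f w" unfolding ze
    by (rule convex_onD[OF cv _ _ inS]) (use t0 in auto)
  ultimately show ?thesis by (simp add: algebra_simps)
qed



lemma pair_min_aux:
  fixes e :: real and m n K :: nat
  assumes e: "e \<le> 0" and m: "m \<ge> 1" and mn: "m \<le> n" and K: "m + n \<le> K"
  shows "real (K div 2) powr e + real (K - K div 2) powr e \<le> real m powr e + real n powr e"
proof -
  have cv: "convex_on {0<..} (\<lambda>t::real. t powr e)" by (rule convex_powr_neg[OF e])
  have m2: "m \<le> K div 2" using mn K by linarith
  have h2: "K div 2 \<le> K - K div 2" by linarith
  have h3: "K - K div 2 \<le> K - m" using m2 by linarith
  have sumeq: "real m + real (K - m) = real (K div 2) + real (K - K div 2)"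
    using K m2 by (simp add: of_nat_diff)
  have "real (K div 2) powr e + real (K - K div 2) powr e \<le> real m powr e + real (K - m) powr e"
    by (rule karamata2[OF cv]) (use m m2 h2 h3 sumeq in auto)
  also have "real (K - m) powr e \<le> real n powr e"
    using e m mn K by (intro powr_mono2') auto
  finally show ?thesis by simp
qed

lemma pair_min:
  fixes e :: real and m n K :: nat
  assumes e: "e \<le> 0" and m: "m \<ge> 1" and n: "n \<ge> 1" and K: "m + n \<le> K"
  shows "real (K div 2) powr e + real (K - K div 2) powr e \<le> real m powr e + real n powr e"
proof (cases "m \<le> n")
  case True then show ?thesis using pair_min_aux[OF e m True K] by simp
next
  case False
  then have "n \<le> m" by simp
  then show ?thesis using pair_min_aux[OF e n _ ] K by (simp add: add.commute)
qed

lemma helperC: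
  fixes X M a :: real
  assumes X: "X > 0" and M: "M > 0" and a: "a < 3"
  shows "((X / 2) powr ((1 - a) / (3 - a)) * (2 * M)) powr (3 - a) = 4 * X powr (1 - a) * M powr (3 - a)"
proof -
  have ee: "(1 - a) / (3 - a) * (3 - a) = 1 - a" using a by simp
  have "((X / 2) powr ((1 - a) / (3 - a)) * (2 * M)) powr (3 - a)
      = ((X / 2) powr ((1 - a) / (3 - a))) powr (3 - a) * (2 powr (3 - a) * M powr (3 - a))"
    by (simp add: powr_mult)
  also have "((X / 2) powr ((1 - a) / (3 - a))) powr (3 - a) = (X / 2) powr (1 - a)"
    by (simp only: powr_powr ee)
  also have "(X / 2) powr (1 - a) = X powr (1 - a) / 2 powr (1 - a)" by (rule powr_divide)
  also have "2 powr (3 - a) = 4 * 2 powr (1 - a)"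
  proof -
    have "2 powr (3 - a) = 2 powr (2 + (1 - a))" by simp
    also have "\<dots> = 2 powr 2 * 2 powr (1 - a)" by (rule powr_add)
    finally show ?thesis by simp
  qed
  finally show ?thesis by simp
qed

lemma eq_C:
  fixes a :: real and K :: nat
  assumes a1: "1 < a" and a2: "a \<le> 2" and K: "K \<ge> 2"
  shows "(real (K div 2) powr ((1 - a) / (3 - a)) + real (K - K div 2) powr ((1 - a) / (3 - a))) powr (3 - a) = 4 * C a K"
proof -
  define e where "e = (1 - a) / (3 - a)"
  have Kp: "real K > 0" using K by simp
  show ?thesis
  proof (cases "even K")
    case True
    then have h: "real (K div 2) = real K / 2" "real (K - K div 2) = real K / 2"
      by (auto elim!: evenE)
    have "(real (K div 2) powr e + real (K - K div 2) powr e) = (real K / 2) powr e * (2 * 1)"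
      unfolding h by simp
    then have "(real (K div 2) powr e + real (K - K div 2) powr e) powr (3 - a) = 4 * real K powr (1 - a) * 1 powr (3 - a)"
      using helperC[OF Kp _ , of 1 a] a2 by (simp add: e_def)
    then show ?thesis using True a1 a2 by (simp add: C_def e_def)
  next
    case False
    then obtain j where j: "K = 2 * j + 1" by (metis oddE)
    have h: "real (K div 2) = real K / 2 * (1 - 1 / real K)" "real (K - K div 2) = real K / 2 * (1 + 1 / real K)"
      using Kp by (simp_all add: j field_simps)
    define M where "M = ((1 - 1 / real K) powr e + (1 + 1 / real K) powr e) / 2"
    have Mp: "M > 0"
    proof -
      have "1 / real K > 0" using Kp by simp
      then have "1 + 1 / real K > 0" by linarith
      then have p1: "(1 + 1 / real K) powr e > 0" by simp
      have p2: "(1 - 1 / real K) powr e \<ge> 0" by simp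
      show ?thesis unfolding M_def using p1 p2 by (simp add: add_nonneg_pos)
    qed
    have "(real (K div 2) powr e + real (K - K div 2) powr e) = (real K / 2) powr e * (2 * M)"
    proof -
      have g: "A * p + A * q = A * (2 * ((p + q) / 2))" for A p q :: real by (simp add: algebra_simps)
      show ?thesis unfolding h M_def powr_mult by (rule g)
    qed
    then have "(real (K div 2) powr e + real (K - K div 2) powr e) powr (3 - a) = 4 * real K powr (1 - a) * M powr (3 - a)"
      using helperC[OF Kp Mp, of a] a2 by (simp add: e_def)
    then show ?thesis using False a1 a2 by (simp add: C_def e_def M_def)
  qed
qed



lemma cond_b:
  fixes r :: "nat \<Rightarrow> real"
  assumes a1: "1 < a" and a2: "a \<le> 2" and K: "K \<ge> 2"
    and rpos: "\<And>k. k < K \<Longrightarrow> r k > 0" and s1: "(\<Sum>k<K. r k) = 1"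
    and PN: "P \<subseteq> {..<K}" "N \<subseteq> {..<K}" "P \<inter> N = {}" "P \<noteq> {}" "N \<noteq> {}"
  shows "4 * C a K \<le> 1 / (\<Sum>k\<in>P. r k powr (2 - a)) + 1 / (\<Sum>k\<in>N. r k powr (2 - a))"
proof -
  define b where "b = 2 - a"
  define e where "e = (1 - a) / (3 - a)"
  have b0: "0 \<le> b" "b \<le> 1" using a1 a2 by (simp_all add: b_def)
  have eb: "e * (1 + b) = b - 1" using a1 a2 by (simp add: e_def b_def)
  have e0: "e \<le> 0" using a1 a2 by (simp add: e_def divide_nonpos_pos)
  have fin: "finite P" "finite N" using PN finite_subset by blast+
  have rP: "r k > 0" if "k \<in> P" for k using PN that rpos by auto
  have rN: "r k > 0" if "k \<in> N" for k using PN that rpos by auto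
  define m where "m = card P"
  define n where "n = card N"
  have m1: "m \<ge> 1" using fin PN by (simp add: m_def Suc_le_eq card_gt_0_iff)
  have n1: "n \<ge> 1" using fin PN by (simp add: n_def Suc_le_eq card_gt_0_iff)
  have mnK: "m + n \<le> K"
  proof -
    have "m + n = card (P \<union> N)" using fin PN by (simp add: m_def n_def card_Un_disjoint)
    also have "\<dots> \<le> card {..<K}" using PN by (intro card_mono) auto
    finally show ?thesis by simp
  qed
  define x where "x = (\<Sum>k\<in>P. r k)"
  define y where "y = (\<Sum>k\<in>N. r k)"
  have xpos: "x > 0" unfolding x_def using rP by (intro sum_pos[OF fin(1) PN(4)])
  have ypos: "y > 0" unfolding y_def using rN by (intro sum_pos[OF fin(2) PN(5)])
  have xy: "x + y \<le> 1" unfolding x_def y_def by (rule subset_sum_le1[OF rpos s1 PN(1-3)])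
  have Apos: "(\<Sum>k\<in>P. r k powr b) > 0" using rP pospow by (intro sum_pos[OF fin(1) PN(4)]) blast
  have Bpos: "(\<Sum>k\<in>N. r k powr b) > 0" using rN pospow by (intro sum_pos[OF fin(2) PN(5)]) blast
  have A: "(\<Sum>k\<in>P. r k powr b) \<le> real m powr (1 - b) * x powr b"
    unfolding x_def m_def by (rule young_sum[OF fin(1) PN(4) rP b0])
  have B: "(\<Sum>k\<in>N. r k powr b) \<le> real n powr (1 - b) * y powr b"
    unfolding y_def n_def by (rule young_sum[OF fin(2) PN(5) rN b0])
  define U where "U = real m powr e"
  define V where "V = real n powr e"
  have Upos: "U > 0" using m1 by (simp add: U_def)
  have Vpos: "V > 0" using n1 by (simp add: V_def)
  have Ue: "U powr (1 + b) = 1 / real m powr (1 - b)"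
  proof -
    have "U powr (1 + b) = real m powr (b - 1)" unfolding U_def powr_powr eb ..
    also have "\<dots> = real m powr (- (1 - b))" by simp
    also have "\<dots> = inverse (real m powr (1 - b))" by (rule powr_minus)
    also have "\<dots> = 1 / real m powr (1 - b)" by (rule inverse_eq_divide)
    finally show ?thesis .
  qed
  have Ve: "V powr (1 + b) = 1 / real n powr (1 - b)"
  proof -
    have "V powr (1 + b) = real n powr (b - 1)" unfolding V_def powr_powr eb ..
    also have "\<dots> = real n powr (- (1 - b))" by simp
    also have "\<dots> = inverse (real n powr (1 - b))" by (rule powr_minus)
    also have "\<dots> = 1 / real n powr (1 - b)" by (rule inverse_eq_divide)
    finally show ?thesis .
  qed
  have mpos: "real m powr (1 - b) > 0" "x powr b > 0" using m1 xpos by simp_all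
  have npos: "real n powr (1 - b) > 0" "y powr b > 0" using n1 ypos by simp_all
  have i1: "U powr (1 + b) / x powr b \<le> 1 / (\<Sum>k\<in>P. r k powr b)"
  proof -
    have "U powr (1 + b) / x powr b = 1 / (real m powr (1 - b) * x powr b)" by (simp add: Ue)
    also have "\<dots> \<le> 1 / (\<Sum>k\<in>P. r k powr b)"
      using A Apos by (intro divide_left_mono) simp_all
    finally show ?thesis .
  qed
  have i2: "V powr (1 + b) / y powr b \<le> 1 / (\<Sum>k\<in>N. r k powr b)"
  proof -
    have "V powr (1 + b) / y powr b = 1 / (real n powr (1 - b) * y powr b)" by (simp add: Ve)
    also have "\<dots> \<le> 1 / (\<Sum>k\<in>N. r k powr b)"
      using B Bpos by (intro divide_left_mono) simp_all
    finally show ?thesis .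
  qed
  have rad: "(U + V) powr (1 + b) / (x + y) powr b \<le> U powr (1 + b) / x powr b + V powr (1 + b) / y powr b"
    by (rule radon[OF Upos Vpos xpos ypos b0(1)])
  have xyb: "(x + y) powr b \<le> 1" "(x + y) powr b > 0" using xy xpos ypos b0 by (simp_all add: powr_le1)
  have uvp: "(U + V) powr (1 + b) \<ge> 0" by simp
  have st: "(U + V) powr (1 + b) \<le> (U + V) powr (1 + b) / (x + y) powr b"
  proof -
    have "(U + V) powr (1 + b) * (x + y) powr b \<le> (U + V) powr (1 + b) * 1"
      using xyb uvp by (intro mult_left_mono) simp_all
    then show ?thesis using xyb by (simp add: le_divide_eq)
  qed
  define T where "T = real (K div 2) powr e + real (K - K div 2) powr e"
  have TUV: "T \<le> U + V" unfolding T_def U_def V_def by (rule pair_min[OF e0 m1 n1 mnK])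
  have Tpos: "T \<ge> 0" by (simp add: T_def)
  have "T powr (1 + b) \<le> (U + V) powr (1 + b)"
    using TUV Tpos b0 by (intro powr_mono2) simp_all
  moreover have "T powr (1 + b) = 4 * C a K"
    unfolding T_def e_def b_def using eq_C[OF a1 a2 K] by (simp add: algebra_simps)
  ultimately show ?thesis using st rad i1 i2 unfolding b_def[symmetric] by linarith
qed



lemma two_pt:
  fixes u v a :: real
  assumes a: "a > 2" and u: "u > 0" and v: "v > 0" and uv: "u + v = 1"
  shows "4 * C a 2 \<le> u powr (a - 2) + v powr (a - 2)"
proof (cases "a \<le> 3")
  case True
  have C: "C a 2 = 1 / 4"
  proof -
    have "max a 3 = 3" using True by simp
    then have "C a 2 = 2 powr (1 - 3)" using a by (simp add: C_def)
    also have "(2::real) powr (1 - 3) = 1 / 4"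
    proof -
      have "(2::real) powr (1 - 3) = 2 powr (- 2)" by simp
      also have "\<dots> = inverse (2 powr 2)" by (rule powr_minus)
      also have "(2::real) powr 2 = 4" by simp
      finally show ?thesis by simp
    qed
    finally show ?thesis .
  qed
  have "u powr 1 \<le> u powr (a - 2)" using True u uv v by (intro powr_mono') auto
  moreover have "v powr 1 \<le> v powr (a - 2)" using True u uv v by (intro powr_mono') auto
  ultimately show ?thesis using C u v uv by simp
next
  case False
  have C: "C a 2 = 2 powr (1 - a)" using False a by (simp add: C_def max_def)
  have cv: "convex_on {0<..} (\<lambda>z::real. z powr (a - 2))" using False by (intro powr_convex) simp
  have c: "((1 - 1/2) *\<^sub>R u + (1/2) *\<^sub>R v) powr (a - 2) \<le> (1 - 1/2) * u powr (a - 2) + (1/2) * v powr (a - 2)"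
    by (rule convex_onD[OF cv]) (use u v in auto)
  have e: "(1 - 1/2) *\<^sub>R u + (1/2) *\<^sub>R v = 1 / 2" using uv by simp
  have h: "(1/2) powr (a - 2) \<le> (u powr (a - 2) + v powr (a - 2)) / 2"
    using c unfolding e by simp
  have "(1/2::real) powr (a - 2) = 2 powr (1 - a) * 2"
  proof -
    have "(1/2::real) powr (a - 2) = 1 / 2 powr (a - 2)" by (simp add: powr_divide)
    also have "\<dots> = inverse (2 powr (a - 2))" by (simp add: inverse_eq_divide)
    also have "\<dots> = 2 powr (- (a - 2))" by (rule powr_minus[symmetric])
    also have "- (a - 2) = 1 + (1 - a)" by simp
    also have "(2::real) powr (1 + (1 - a)) = 2 powr 1 * 2 powr (1 - a)" by (rule powr_add)
    finally show ?thesis by simp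
  qed
  then show ?thesis using h C by simp
qed

lemma key:
  fixes r x :: "nat \<Rightarrow> real"
  assumes K: "K \<ge> 2" and rpos: "\<And>k. k < K \<Longrightarrow> r k > 0" and s1: "(\<Sum>k<K. r k) = 1"
    and sx: "(\<Sum>k<K. x k) = 0"
  shows "C a K * (norm1 K x)\<^sup>2 \<le> (\<Sum>k<K. r k powr (a - 2) * (x k)\<^sup>2)"
proof -
  consider "a \<le> 1" | "1 < a" "a \<le> 2" | "a > 2" "K = 2" | "a > 2" "K \<noteq> 2" by linarith
  then show ?thesis
  proof cases
    case 1
    have CC: "C a K = 2 powr (1 - a)" using 1 by (simp add: C_def)
    show ?thesis
    proof (rule key_reduce[OF rpos sx])
      fix P N assume PN: "P \<subseteq> {..<K}" "N \<subseteq> {..<K}" "P \<inter> N = {}" "P \<noteq> {}" "N \<noteq> {}"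
      show "4 * C a K \<le> 1 / (\<Sum>k\<in>P. r k powr (2 - a)) + 1 / (\<Sum>k\<in>N. r k powr (2 - a))"
        unfolding CC by (rule cond_a[OF 1 rpos s1 PN])
    qed
  next
    case 2
    show ?thesis
    proof (rule key_reduce[OF rpos sx])
      fix P N assume PN: "P \<subseteq> {..<K}" "N \<subseteq> {..<K}" "P \<inter> N = {}" "P \<noteq> {}" "N \<noteq> {}"
      show "4 * C a K \<le> 1 / (\<Sum>k\<in>P. r k powr (2 - a)) + 1 / (\<Sum>k\<in>N. r k powr (2 - a))"
        by (rule cond_b[OF 2 K rpos s1 PN])
    qed
  next
    case 3
    have s2: "(\<Sum>k<K. f k) = f 0 + f 1" for f :: "nat \<Rightarrow> real"
      using 3 by (simp add: numeral_2_eq_2)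
    have x1: "x 1 = - x 0" using sx s2[of x] by simp
    have n: "norm1 K x = 2 * \<bar>x 0\<bar>" unfolding norm1_def s2 using x1 by simp
    have r01: "r 0 > 0" "r 1 > 0" using rpos 3 by auto
    have "4 * C a 2 \<le> r 0 powr (a - 2) + r 1 powr (a - 2)"
      by (rule two_pt[OF 3(1) r01]) (use s1 s2[of r] in simp)
    then have "4 * C a 2 * (x 0)\<^sup>2 \<le> (r 0 powr (a - 2) + r 1 powr (a - 2)) * (x 0)\<^sup>2"
      by (rule mult_right_mono) simp
    moreover have "(norm1 K x)\<^sup>2 = 4 * (x 0)\<^sup>2" unfolding n by (simp add: power_mult_distrib)
    moreover have "(\<Sum>k<K. r k powr (a - 2) * (x k)\<^sup>2) = (r 0 powr (a - 2) + r 1 powr (a - 2)) * (x 0)\<^sup>2"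
      unfolding s2 x1 by (simp add: algebra_simps)
    ultimately show ?thesis unfolding \<open>K = 2\<close> by (simp only: mult.assoc mult.commute[of 4])
  next
    case 4
    then have "C a K = 0" by (simp add: C_def)
    moreover have "0 \<le> (\<Sum>k<K. r k powr (a - 2) * (x k)\<^sup>2)" by (intro sum_nonneg) simp
    ultimately show ?thesis by simp
  qed
qed

lemma part1:
  assumes "K \<ge> 2"
  shows "strongly_convex_relint K (\<lambda>p. - S K a p) (C a K)"
  by (rule sc_from_hess) (rule key[OF assms], auto)



lemma sum_shift2:
  fixes f :: "nat \<Rightarrow> real"
  assumes "K \<ge> 2"
  shows "(\<Sum>k<K. f k) = f 0 + f 1 + (\<Sum>i<K - 2. f (i + 2))"
proof -
  obtain j where j: "K = Suc (Suc j)" using assms by (metis add_2_eq_Suc le_Suc_ex)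
  have "(\<Sum>k<Suc (Suc j). f k) = f 0 + (\<Sum>i<Suc j. f (Suc i))" by (rule sum.lessThan_Suc_shift)
  also have "(\<Sum>i<Suc j. f (Suc i)) = f 1 + (\<Sum>i<j. f (Suc (Suc i)))" by (subst sum.lessThan_Suc_shift) simp
  finally show ?thesis using j by simp
qed

lemma wit2:
  fixes u v a c :: real
  assumes K: "K \<ge> 2" and u: "0 < u" "u < 1" and v: "0 < v" "v < 1"
    and K2: "K = 2 \<Longrightarrow> u + v = 1" and K3: "K \<noteq> 2 \<Longrightarrow> u + v < 1"
    and lt: "u powr (a - 2) + v powr (a - 2) < 4 * c"
  shows "\<exists>r\<in>relint_simplex K. \<exists>x. (\<Sum>k<K. x k) = 0 \<and> (\<Sum>k<K. r k powr (a - 2) * (x k)\<^sup>2) < c * (norm1 K x)\<^sup>2"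
proof -
  define w where "w = (1 - u - v) / (real K - 2)"
  define r :: "nat \<Rightarrow> real" where "r k = (if k = 0 then u else if k = 1 then v else w)" for k
  define x :: "nat \<Rightarrow> real" where "x k = (if k = 0 then 1 else if k = 1 then -1 else 0)" for k
  have sr: "(\<Sum>k<K. r k) = u + v + real (K - 2) * w"
    unfolding sum_shift2[OF K] by (simp add: r_def)
  have "(\<Sum>k<K. r k) = 1"
  proof (cases "K = 2")
    case True then show ?thesis using sr K2 by simp
  next
    case False
    then have "real K - 2 > 0" using K by simp
    moreover have "real (K - 2) = real K - 2" using K by (simp add: of_nat_diff)
    ultimately show ?thesis using sr by (simp add: w_def)
  qed
  moreover have "\<forall>k<K. 0 < r k \<and> r k < 1"
  proof (intro allI impI)
    fix k assume k: "k < K"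
    show "0 < r k \<and> r k < 1"
    proof (cases "k \<le> 1")
      case True then show ?thesis using u v by (auto simp: r_def)
    next
      case False
      then have "K \<noteq> 2" using k by simp
      then have K1: "real K - 2 \<ge> 1" using K by simp
      have p: "1 - u - v > 0" using K3 \<open>K \<noteq> 2\<close> by simp
      have "w > 0" unfolding w_def using p K1 by simp
      moreover have "w \<le> 1 - u - v" unfolding w_def using p K1 by (simp add: divide_le_eq)
      ultimately show ?thesis using False u v by (simp add: r_def)
    qed
  qed
  ultimately have rin: "r \<in> relint_simplex K" by (simp add: relint_simplex_def)
  have sx: "(\<Sum>k<K. x k) = 0" unfolding sum_shift2[OF K] by (simp add: x_def)
  have n: "norm1 K x = 2" unfolding norm1_def sum_shift2[OF K] by (simp add: x_def)
  have H: "(\<Sum>k<K. r k powr (a - 2) * (x k)\<^sup>2) = u powr (a - 2) + v powr (a - 2)"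
    unfolding sum_shift2[OF K] by (simp add: x_def r_def)
  show ?thesis using rin sx n H lt by (intro bexI[OF _ rin] exI[of _ x]) simp
qed

lemma half_val: "2 * (1/2::real) powr (a - 2) = 4 * 2 powr (1 - a)"
proof -
  have "(1/2::real) powr (a - 2) = 1 / 2 powr (a - 2)" by (simp add: powr_divide)
  also have "\<dots> = inverse (2 powr (a - 2))" by (simp add: inverse_eq_divide)
  also have "\<dots> = 2 powr (- (a - 2))" by (rule powr_minus[symmetric])
  also have "- (a - 2) = 1 + (1 - a)" by simp
  also have "(2::real) powr (1 + (1 - a)) = 2 powr 1 * 2 powr (1 - a)" by (rule powr_add)
  finally show ?thesis by simp
qed



lemma split_const:
  fixes \<alpha> \<beta> :: real
  assumes "M \<le> K"
  shows "(\<Sum>k<K. if k < M then \<alpha> else \<beta>) = real M * \<alpha> + real (K - M) * \<beta>"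
proof -
  have "(\<Sum>k<K. if k < M then \<alpha> else \<beta>) = (\<Sum>k\<in>{0..<M}. if k < M then \<alpha> else \<beta>) + (\<Sum>k\<in>{M..<K}. if k < M then \<alpha> else \<beta>)"
  proof -
    have "(\<Sum>k\<in>{0..<M}. if k < M then \<alpha> else \<beta>) + (\<Sum>k\<in>{M..<K}. if k < M then \<alpha> else \<beta>) = (\<Sum>k\<in>{0..<K}. if k < M then \<alpha> else \<beta>)"
      by (rule sum.atLeastLessThan_concat) (use assms in auto)
    then show ?thesis by (simp add: lessThan_atLeast0)
  qed
  also have "(\<Sum>k\<in>{0..<M}. if k < M then \<alpha> else \<beta>) = (\<Sum>k\<in>{0..<M}. \<alpha>)" by (intro sum.cong) auto
  also have "(\<Sum>k\<in>{M..<K}. if k < M then \<alpha> else \<beta>) = (\<Sum>k\<in>{M..<K}. \<beta>)" by (intro sum.cong) auto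
  finally show ?thesis by simp
qed

lemma termlemma:
  fixes m T a :: real
  assumes m: "m > 0" and T: "T > 0" and a: "a < 3"
  shows "m * (((m powr ((1 - a) / (3 - a)) / T) / m) powr (a - 2) * (1 / m)\<^sup>2)
       = m powr ((1 - a) / (3 - a)) * T powr (2 - a)"
proof -
  define e where "e = (1 - a) / (3 - a)"
  have ee: "(e - 1) * (a - 2) - 1 = e" using a by (simp add: e_def field_simps)
  have q: "(m powr e / T) / m = m powr (e - 1) / T"
  proof -
    have "m powr (e - 1) = m powr e / m powr 1" by (rule powr_diff)
    then show ?thesis using m by simp
  qed
  have qp: "(m powr (e - 1) / T) powr (a - 2) = m powr ((e - 1) * (a - 2)) / T powr (a - 2)"
    by (simp add: powr_divide powr_powr)
  have mm: "m * (X * (1 / m)\<^sup>2) = X / m" for X using m by (simp add: power2_eq_square)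
  have md: "m powr ((e - 1) * (a - 2)) / m = m powr e"
  proof -
    have "m powr ((e - 1) * (a - 2) - 1) = m powr ((e - 1) * (a - 2)) / m powr 1" by (rule powr_diff)
    then show ?thesis using m ee by simp
  qed
  have Tp: "1 / T powr (a - 2) = T powr (2 - a)"
  proof -
    have "T powr (- (a - 2)) = inverse (T powr (a - 2))" by (rule powr_minus)
    then show ?thesis by (simp add: inverse_eq_divide)
  qed
  have "m * (((m powr e / T) / m) powr (a - 2) * (1 / m)\<^sup>2) = (m powr ((e - 1) * (a - 2)) / T powr (a - 2)) / m"
    unfolding q qp mm ..
  also have "\<dots> = (m powr ((e - 1) * (a - 2)) / m) * (1 / T powr (a - 2))" by simp
  also have "\<dots> = m powr e * T powr (2 - a)" unfolding md Tp ..
  finally show ?thesis by (simp add: e_def)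
qed

lemma wit_mid:
  fixes a :: real
  assumes a1: "1 < a" and a2: "a \<le> 2" and K: "K \<ge> 2"
  shows "\<exists>r\<in>relint_simplex K. \<exists>x. (\<Sum>k<K. x k) = 0 \<and> (\<Sum>k<K. r k powr (a - 2) * (x k)\<^sup>2) = 4 * C a K \<and> norm1 K x = 2"
proof -
  define e where "e = (1 - a) / (3 - a)"
  define M where "M = K div 2"
  define Nn where "Nn = K - M"
  have MK: "M \<le> K" by (simp add: M_def)
  have M1: "real M \<ge> 1" using K by (simp add: M_def)
  have N1: "real Nn \<ge> 1" using K by (simp add: Nn_def M_def)
  have Mp: "real M > 0" "real Nn > 0" using M1 N1 by simp_all
  define T where "T = real M powr e + real Nn powr e"
  have pe: "real M powr e > 0" "real Nn powr e > 0" using Mp by simp_all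
  have Tp: "T > 0" unfolding T_def using pe by (rule add_pos_pos)
  define \<alpha> where "\<alpha> = (real M powr e / T) / real M"
  define \<beta> where "\<beta> = (real Nn powr e / T) / real Nn"
  define r :: "nat \<Rightarrow> real" where "r k = (if k < M then \<alpha> else \<beta>)" for k
  define x :: "nat \<Rightarrow> real" where "x k = (if k < M then 1 / real M else - 1 / real Nn)" for k
  have ab: "\<alpha> > 0" "\<beta> > 0" using pe Tp Mp by (simp_all add: \<alpha>_def \<beta>_def)
  have f1: "real M powr e / T < 1" "real Nn powr e / T < 1" using pe Tp by (simp_all add: T_def)
  have a1': "\<alpha> < 1"
  proof -
    have "\<alpha> * real M = real M powr e / T" using Mp by (simp add: \<alpha>_def)
    moreover have "\<alpha> \<le> \<alpha> * real M" using ab M1 by (simp add: mult_le_cancel_left1)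
    ultimately show ?thesis using f1 by linarith
  qed
  have b1': "\<beta> < 1"
  proof -
    have "\<beta> * real Nn = real Nn powr e / T" using Mp by (simp add: \<beta>_def)
    moreover have "\<beta> \<le> \<beta> * real Nn" using ab N1 by (simp add: mult_le_cancel_left1)
    ultimately show ?thesis using f1 by linarith
  qed
  have KM: "real (K - M) = real Nn" by (simp add: Nn_def)
  have "(\<Sum>k<K. r k) = real M * \<alpha> + real Nn * \<beta>"
    unfolding r_def split_const[OF MK] KM ..
  also have "\<dots> = real M powr e / T + real Nn powr e / T" using Mp by (simp add: \<alpha>_def \<beta>_def)
  also have "\<dots> = 1" using Tp by (simp add: T_def add_divide_distrib[symmetric])
  finally have sr: "(\<Sum>k<K. r k) = 1" .
  have rin: "r \<in> relint_simplex K" unfolding relint_simplex_def using sr ab a1' b1' by (simp add: r_def)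
  have sx: "(\<Sum>k<K. x k) = 0"
  proof -
    have "(\<Sum>k<K. x k) = real M * (1 / real M) + real Nn * (- 1 / real Nn)"
      unfolding x_def split_const[OF MK] KM ..
    then show ?thesis using Mp by simp
  qed
  have n: "norm1 K x = 2"
  proof -
    have "norm1 K x = (\<Sum>k<K. if k < M then 1 / real M else 1 / real Nn)"
      unfolding norm1_def x_def by (intro sum.cong) auto
    also have "\<dots> = real M * (1 / real M) + real Nn * (1 / real Nn)"
      unfolding split_const[OF MK] KM ..
    finally show ?thesis using Mp by simp
  qed
  have "(\<Sum>k<K. r k powr (a - 2) * (x k)\<^sup>2) = (\<Sum>k<K. if k < M then \<alpha> powr (a - 2) * (1 / real M)\<^sup>2 else \<beta> powr (a - 2) * (- 1 / real Nn)\<^sup>2)"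
    unfolding r_def x_def by (intro sum.cong) auto
  also have "\<dots> = real M * (\<alpha> powr (a - 2) * (1 / real M)\<^sup>2) + real Nn * (\<beta> powr (a - 2) * (1 / real Nn)\<^sup>2)"
    unfolding split_const[OF MK] KM by (simp add: power2_eq_square)
  also have "\<dots> = real M powr e * T powr (2 - a) + real Nn powr e * T powr (2 - a)"
    unfolding \<alpha>_def \<beta>_def e_def using termlemma[OF Mp(1) Tp, of a] termlemma[OF Mp(2) Tp, of a] a2 by simp
  also have "\<dots> = T * T powr (2 - a)" by (simp add: T_def algebra_simps)
  also have "\<dots> = T powr (3 - a)"
  proof -
    have "T powr (1 + (2 - a)) = T powr 1 * T powr (2 - a)" by (rule powr_add)
    then show ?thesis using Tp by simp
  qed
  also have "\<dots> = 4 * C a K" unfolding T_def e_def M_def Nn_def by (rule eq_C[OF a1 a2 K])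
  finally show ?thesis using rin sx n by blast
qed



lemma powr_inv_exp:
  fixes t g :: real
  assumes "t > 0" "g \<noteq> 0"
  shows "(t powr (1 / g)) powr g = t"
  using assms by (simp add: powr_powr)

lemma witness:
  fixes a c :: real
  assumes K: "K \<ge> 2" and cC: "c > C a K"
  shows "\<exists>r\<in>relint_simplex K. \<exists>x. (\<Sum>k<K. x k) = 0 \<and> (\<Sum>k<K. r k powr (a - 2) * (x k)\<^sup>2) < c * (norm1 K x)\<^sup>2"
proof -
  consider "a \<le> 1" "K = 2" | "a \<le> 1" "K \<noteq> 2" | "1 < a" "a \<le> 2" | "a > 2" "K = 2" "a \<le> 3"
    | "a > 3" "K = 2" | "a > 2" "K \<noteq> 2" by linarith
  then show ?thesis
  proof cases
    case 1
    have CC: "C a K = 2 powr (1 - a)" using 1 by (simp add: C_def)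
    show ?thesis
    proof (rule wit2[OF K])
      show "(1/2::real) powr (a - 2) + (1/2) powr (a - 2) < 4 * c"
        using half_val[of a] cC CC by simp
    qed (use 1 in auto)
  next
    case 2
    define Cp where "Cp = C a K"
    have CC: "Cp = 2 powr (1 - a)" using 2 by (simp add: C_def Cp_def)
    have Cp: "Cp > 0" using CC by simp
    have q1: "c / Cp > 1" using cC Cp by (simp add: Cp_def)
    define t where "t = (1 + c / Cp) / 2"
    have gq: "1 < (1 + q) / 2 \<and> (1 + q) / 2 < q" if "1 < q" for q :: real using that by simp
    have t1a: "t > 1" using gq[OF q1] unfolding t_def by blast
    have t1b: "t < c / Cp" using gq[OF q1] unfolding t_def by blast
    note t1 = t1a t1b
    define \<rho> where "\<rho> = t powr (1 / (a - 2))"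
    have \<rho>0: "\<rho> > 0" using t1 by (simp add: \<rho>_def)
    have \<rho>1: "\<rho> < 1" unfolding \<rho>_def using t1 2 by (intro powr_less_one) (simp_all add: divide_neg_pos)
    have \<rho>g: "\<rho> powr (a - 2) = t" unfolding \<rho>_def using t1 2 by (intro powr_inv_exp) simp_all
    have u: "(\<rho> * (1/2)) powr (a - 2) = t * (1/2) powr (a - 2)" by (subst powr_mult) (simp only: \<rho>g)
    show ?thesis
    proof (rule wit2[OF K, of "\<rho> * (1/2)" "\<rho> * (1/2)"])
      have "(\<rho> * (1/2)) powr (a - 2) + (\<rho> * (1/2)) powr (a - 2) = t * (2 * (1/2) powr (a - 2))"
        unfolding u by simp
      also have "\<dots> = t * (4 * Cp)" using half_val[of a] CC by simp
      also have "\<dots> < (c / Cp) * (4 * Cp)" using t1 Cp by (intro mult_strict_right_mono) simp_all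
      also have "\<dots> = 4 * c" using Cp by simp
      finally show "(\<rho> * (1/2)) powr (a - 2) + (\<rho> * (1/2)) powr (a - 2) < 4 * c" .
    qed (use 2 \<rho>0 \<rho>1 in auto)
  next
    case 3
    obtain r x where r: "r \<in> relint_simplex K" and sx: "(\<Sum>k<K. x k) = 0"
      and H: "(\<Sum>k<K. r k powr (a - 2) * (x k)\<^sup>2) = 4 * C a K" and n: "norm1 K x = 2"
      using wit_mid[OF 3 K] by blast
    have "(\<Sum>k<K. r k powr (a - 2) * (x k)\<^sup>2) < c * (norm1 K x)\<^sup>2" using H n cC by simp
    then show ?thesis using r sx by blast
  next
    case 4
    have CC: "C a K = 1 / 4"
    proof -
      have "max a 3 = 3" using 4 by simp
      then have "C a K = 2 powr (1 - 3)" using 4 by (simp add: C_def)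
      also have "(2::real) powr (1 - 3) = 1 / 4"
      proof -
        have "(2::real) powr (1 - 3) = 2 powr (- 2)" by simp
        also have "\<dots> = inverse (2 powr 2)" by (rule powr_minus)
        also have "(2::real) powr 2 = 4" by simp
        finally show ?thesis by simp
      qed
      finally show ?thesis .
    qed
    define d where "d = (4 * c - 1) / 2"
    have d: "d > 0" using cC CC by (simp add: d_def)
    define w0 where "w0 = d powr (1 / (a - 2))"
    have w0: "w0 > 0" using d by (simp add: w0_def)
    define \<epsilon> where "\<epsilon> = min (1/2) w0"
    have e0: "\<epsilon> > 0" "\<epsilon> \<le> 1/2" "\<epsilon> \<le> w0" using w0 by (auto simp: \<epsilon>_def)
    have g: "a - 2 > 0" using 4 by simp
    have "\<epsilon> powr (a - 2) \<le> w0 powr (a - 2)" using e0 g by (intro powr_mono2) simp_all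
    also have "w0 powr (a - 2) = d" unfolding w0_def using d g by (intro powr_inv_exp) simp_all
    finally have i1: "\<epsilon> powr (a - 2) \<le> d" .
    have "(1 - \<epsilon>) powr (a - 2) < 1 powr (a - 2)" using e0 g by (intro powr_less_mono2) simp_all
    then have i2: "(1 - \<epsilon>) powr (a - 2) < 1" by simp
    show ?thesis
    proof (rule wit2[OF K, of \<epsilon> "1 - \<epsilon>"])
      show "\<epsilon> powr (a - 2) + (1 - \<epsilon>) powr (a - 2) < 4 * c"
        using i1 i2 d cC CC by (simp add: d_def)
    qed (use 4 e0 in auto)
  next
    case 5
    have CC: "C a K = 2 powr (1 - a)" using 5 by (simp add: C_def max_def)
    show ?thesis
    proof (rule wit2[OF K])
      show "(1/2::real) powr (a - 2) + (1/2) powr (a - 2) < 4 * c"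
        using half_val[of a] cC CC by simp
    qed (use 5 in auto)
  next
    case 6
    have CC: "C a K = 0" using 6 by (simp add: C_def)
    have c0: "c > 0" using cC CC by simp
    define w0 where "w0 = c powr (1 / (a - 2))"
    have w0: "w0 > 0" using c0 by (simp add: w0_def)
    define \<epsilon> where "\<epsilon> = min (1/4) w0"
    have e0: "\<epsilon> > 0" "\<epsilon> \<le> 1/4" "\<epsilon> \<le> w0" using w0 by (auto simp: \<epsilon>_def)
    have g: "a - 2 > 0" using 6 by simp
    have "\<epsilon> powr (a - 2) \<le> w0 powr (a - 2)" using e0 g by (intro powr_mono2) simp_all
    also have "w0 powr (a - 2) = c" unfolding w0_def using c0 g by (intro powr_inv_exp) simp_all
    finally have i1: "\<epsilon> powr (a - 2) \<le> c" .
    show ?thesis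
    proof (rule wit2[OF K, of \<epsilon> \<epsilon>])
      show "\<epsilon> powr (a - 2) + \<epsilon> powr (a - 2) < 4 * c" using i1 c0 by simp
    qed (use 6 e0 in auto)
  qed
qed

lemma part2:
  assumes K: "K \<ge> 2" and sc: "strongly_convex_relint K (\<lambda>p. - S K a p) c"
  shows "c \<le> C a K"
proof (rule ccontr)
  assume "\<not> c \<le> C a K"
  then have "c > C a K" by simp
  then obtain r x where r: "r \<in> relint_simplex K" and sx: "(\<Sum>k<K. x k) = 0"
    and lt: "(\<Sum>k<K. r k powr (a - 2) * (x k)\<^sup>2) < c * (norm1 K x)\<^sup>2"
    using witness[OF K] by blast
  have "c * (norm1 K x)\<^sup>2 \<le> (\<Sum>k<K. r k powr (a - 2) * (x k)\<^sup>2)"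
    by (rule hess_from_sc[OF sc r sx])
  then show False using lt by simp
qed

theorem corollary1:
  fixes K :: nat and \<alpha> :: real
  assumes "K \<ge> 2"
  shows "strongly_convex_relint K (\<lambda>p. - S K \<alpha> p) (C \<alpha> K)
       \<and> (\<forall>c. strongly_convex_relint K (\<lambda>p. - S K \<alpha> p) c \<longrightarrow> c \<le> C \<alpha> K)"
  using part1[OF assms] part2[OF assms] by blast


end
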